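(* Let $(f,g)$ be a Jacobian pair, $\xi$ a generic element of $\mathbb K$, $f_\xi=f-\xi$. Let $\alpha=\sum a_jt^j$ be a root of $f_\xi(y)$ in $\mathbb K\ll t\gg$, let $\delta=\max\{\operatorname{ord}(\alpha-\beta): g(\beta)=0\}$ and let $\sigma=\sum_{j<\delta}a_jt^j+\pi t^\delta$ be the related final $\pi$-root. Then: (i) if $\alpha$ is a major root, then $\delta<1$; (ii) if $\alpha$ is a minor root, then $\delta>1$.
   Context: $\mathbb K$ is an algebraically closed field of characteristic $0$. A Jacobian pair is a pair $(f,g)$ in $\mathbb K[x,y]$, both monic in $y$, with $f_xg_y-f_yg_x\in\mathbb K^*$. Put $x=t^{-1}$; for $h\in\mathbb K[x,y]$ write $h(y)=h(t^{-1},y)$, a polynomial in $y$ over the Puiseux field $\mathbb K\ll t\gg$; $\operatorname{ord}$ is the smallest exponent of $t$ with nonzero coefficient; $\beta$ ranges over roots of $g(y)$ in $\mathbb K\ll t\gg$; $\pi$ is an indeterminate. A root $\alpha$ of $f_\xi(y)$ is called major if $\operatorname{ord}g(\alpha)<0$ and minor if $\operatorname{ord}g(\alpha)=0$. *)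

theory Defs
  imports "HOL-Computational_Algebra.Polynomial" "HOL-Computational_Algebra.Formal_Laurent_Series"
begin

text \<open>Bivariate polynomials K[x,y] are represented as 'a poly poly:
  the outer variable is y, the coefficients are polynomials in x.\<close>

definition partial_x :: "'a::field poly poly \<Rightarrow> 'a poly poly" where
  "partial_x h = map_poly pderiv h"

definition partial_y :: "'a::field poly poly \<Rightarrow> 'a poly poly" where
  "partial_y h = pderiv h"

definition jacobian_pair :: "'a::field poly poly \<Rightarrow> 'a poly poly \<Rightarrow> bool" where
  "jacobian_pair f g \<longleftrightarrow> lead_coeff f = 1 \<and> lead_coeff g = 1 \<and>
     (\<exists>c. c \<noteq> 0 \<and> partial_x f * partial_y g - partial_y f * partial_x g = [:[:c:]:])"

text \<open>Substitution x = t^{-1} with t = s^N, giving a polynomial in y over the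
  Laurent series field K((s)) = K((t^{1/N})) \<subseteq> Puiseux field.\<close>
definition subst_inv :: "nat \<Rightarrow> 'a::field poly poly \<Rightarrow> 'a fls poly" where
  "subst_inv N h = map_poly (\<lambda>p. poly (map_poly fls_const p) (fls_X_intpow (- int N))) h"

definition splits :: "'a::field poly \<Rightarrow> bool" where
  "splits P \<longleftrightarrow> (\<exists>rs. P = smult (lead_coeff P) (\<Prod>r\<leftarrow>rs. [:- r, 1:]))"

definition ord_t :: "nat \<Rightarrow> 'a::zero fls \<Rightarrow> rat" where
  "ord_t N a = of_int (fls_subdegree a) / of_nat N"

end

theory Submission
  imports Defs
begin
unbundle fps_syntax

section \<open>Ring homomorphisms\<close>

definition rhom :: "('a::comm_ring_1 \<Rightarrow> 'b::comm_ring_1) \<Rightarrow> bool" where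
  "rhom h \<longleftrightarrow> h 1 = 1 \<and> (\<forall>a b. h (a+b) = h a + h b) \<and> (\<forall>a b. h (a*b) = h a * h b)"

lemma rhom_1: "rhom h \<Longrightarrow> h 1 = 1" by (simp add: rhom_def)
lemma rhom_add: "rhom h \<Longrightarrow> h (a+b) = h a + h b" by (simp add: rhom_def)
lemma rhom_mult: "rhom h \<Longrightarrow> h (a*b) = h a * h b" by (simp add: rhom_def)
lemma rhom_0: "rhom h \<Longrightarrow> h 0 = 0"
  using rhom_add[of h 0 0] by simp
lemma rhom_uminus: "rhom h \<Longrightarrow> h (-a) = - h a"
  using rhom_add[of h a "-a"] rhom_0[of h] by (simp add: eq_neg_iff_add_eq_0 add.commute)
lemma rhom_diff: "rhom h \<Longrightarrow> h (a-b) = h a - h b"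
  using rhom_add[of h a "-b"] rhom_uminus[of h b] by simp
lemma rhom_sum: "rhom h \<Longrightarrow> h (sum f A) = (\<Sum>x\<in>A. h (f x))"
  by (induct A rule: infinite_finite_induct) (auto simp: rhom_0 rhom_add)
lemma rhom_power: "rhom h \<Longrightarrow> h (a^n) = h a ^ n"
  by (induct n) (auto simp: rhom_1 rhom_mult)

lemma map_poly_add_h: "rhom h \<Longrightarrow> map_poly h (p+q) = map_poly h p + map_poly h q"
  by (intro poly_eqI) (simp add: coeff_map_poly rhom_0 rhom_add)
lemma map_poly_smult_h: "rhom h \<Longrightarrow> map_poly h (smult c p) = smult (h c) (map_poly h p)"
  by (intro poly_eqI) (simp add: coeff_map_poly rhom_0 rhom_mult)
lemma map_poly_mult_h: "rhom h \<Longrightarrow> map_poly h (p*q) = map_poly h p * map_poly h q"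
  by (induct p rule: pCons_induct)
     (simp_all add: map_poly_pCons rhom_0 map_poly_add_h map_poly_smult_h)
lemma map_poly_uminus_h: "rhom h \<Longrightarrow> map_poly h (-p) = - map_poly h p"
  by (intro poly_eqI) (simp add: coeff_map_poly rhom_0 rhom_uminus)
lemma map_poly_diff_h: "rhom h \<Longrightarrow> map_poly h (p-q) = map_poly h p - map_poly h q"
  by (intro poly_eqI) (simp add: coeff_map_poly rhom_0 rhom_diff)
lemma map_poly_1_h: "rhom h \<Longrightarrow> map_poly h 1 = 1"
  by (simp add: one_pCons map_poly_pCons rhom_0 rhom_1)
lemma rhom_map_poly: "rhom h \<Longrightarrow> rhom (map_poly h)"
  by (simp add: rhom_def map_poly_1_h map_poly_add_h map_poly_mult_h)

lemma poly_hom: "rhom h \<Longrightarrow> h (poly p x) = poly (map_poly h p) (h x)"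
  by (induct p rule: pCons_induct) (simp_all add: map_poly_pCons rhom_0 rhom_add rhom_mult)

lemma rhom_eval: "rhom h \<Longrightarrow> rhom (\<lambda>p. poly (map_poly h p) x)"
  by (simp add: rhom_def map_poly_1_h map_poly_add_h map_poly_mult_h)

lemma rhom_comp: "rhom h \<Longrightarrow> rhom k \<Longrightarrow> rhom (\<lambda>x. k (h x))"
  by (simp add: rhom_def)

lemma map_poly_prod_list_h: "rhom h \<Longrightarrow> map_poly h (prod_list ps) = prod_list (map (map_poly h) ps)"
  by (induct ps) (simp_all add: map_poly_1_h map_poly_mult_h)

section \<open>Coefficientwise maps of Laurent series\<close>

lift_definition fls_map :: "('a::zero \<Rightarrow> 'b::zero) \<Rightarrow> 'a fls \<Rightarrow> 'b fls" is
  "\<lambda>h f n. if f n = 0 then 0 else h (f n)"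
  by (auto elim: eventually_mono)

lemma fls_map_nth: "h 0 = 0 \<Longrightarrow> fls_map h f $$ n = h (f $$ n)"
  by transfer auto

lemma fls_times_nth_bound:
  fixes f g :: "'a::comm_ring_1 fls"
  assumes "\<forall>i<a. f $$ i = 0" "\<forall>i<b. g $$ i = 0"
  shows "(f*g) $$ n = (\<Sum>i=a..n-b. f $$ i * g $$ (n-i))"
proof (cases "f = 0 \<or> g = 0")
  case True thus ?thesis by auto
next
  case False
  hence nz: "f \<noteq> 0" "g \<noteq> 0" by auto
  have sa: "a \<le> fls_subdegree f" using nz assms by (intro fls_subdegree_geI) auto
  have sb: "b \<le> fls_subdegree g" using nz assms by (intro fls_subdegree_geI) auto
  have "(f*g) $$ n = (\<Sum>i=fls_subdegree f..n - fls_subdegree g. f $$ i * g $$ (n - i))"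
    by (rule fls_times_nth(2))
  also have "\<dots> = (\<Sum>i=a..n-b. f $$ i * g $$ (n-i))"
  proof (rule sum.mono_neutral_left)
    show "\<forall>i\<in>{a..n - b} - {fls_subdegree f..n - fls_subdegree g}. f $$ i * g $$ (n - i) = 0"
    proof
      fix i assume "i \<in> {a..n - b} - {fls_subdegree f..n - fls_subdegree g}"
      hence "i < fls_subdegree f \<or> n - i < fls_subdegree g" by auto
      thus "f $$ i * g $$ (n - i) = 0" by auto
    qed
  qed (use sa sb in auto)
  finally show ?thesis .
qed

lemma rhom_fls_map:
  fixes h :: "'a::comm_ring_1 \<Rightarrow> 'b::comm_ring_1"
  assumes "rhom h" shows "rhom (fls_map h)"
proof -
  have h0: "h 0 = 0" using assms by (rule rhom_0)
  have m: "fls_map h (a*b) = fls_map h a * fls_map h b" for a b :: "'a fls"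
  proof (rule fls_eqI)
    fix n
    have ba: "\<forall>i<fls_subdegree a. a $$ i = 0" "\<forall>i<fls_subdegree b. b $$ i = 0" by auto
    have bb: "\<forall>i<fls_subdegree a. fls_map h a $$ i = 0" "\<forall>i<fls_subdegree b. fls_map h b $$ i = 0"
      by (auto simp: fls_map_nth h0)
    show "fls_map h (a*b) $$ n = (fls_map h a * fls_map h b) $$ n"
      unfolding fls_map_nth[of h, OF h0] fls_times_nth_bound[OF ba, of n] fls_times_nth_bound[OF bb, of n]
      by (simp add: rhom_sum[OF assms] rhom_mult[OF assms] fls_map_nth h0)
  qed
  have a: "fls_map h (a+b) = fls_map h a + fls_map h b" for a b :: "'a fls"
    by (rule fls_eqI) (simp add: fls_map_nth h0 rhom_add[OF assms])
  have o: "fls_map h 1 = 1"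
    by (rule fls_eqI) (simp add: fls_map_nth h0 rhom_1[OF assms])
  show ?thesis using m a o by (simp add: rhom_def)
qed

section \<open>Derivations\<close>

definition deriv_op :: "('a::comm_ring_1 \<Rightarrow> 'a) \<Rightarrow> bool" where
  "deriv_op d \<longleftrightarrow> (\<forall>a b. d (a+b) = d a + d b) \<and> (\<forall>a b. d (a*b) = a * d b + d a * b)"

lemma deriv_add: "deriv_op d \<Longrightarrow> d (a+b) = d a + d b" by (simp add: deriv_op_def)
lemma deriv_mult: "deriv_op d \<Longrightarrow> d (a*b) = a * d b + d a * b" by (simp add: deriv_op_def)
lemma deriv_0: "deriv_op d \<Longrightarrow> d 0 = 0" using deriv_add[of d 0 0] by simp
lemma deriv_uminus: "deriv_op d \<Longrightarrow> d (-a) = - d a"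
  using deriv_add[of d a "-a"] deriv_0[of d] by (simp add: eq_neg_iff_add_eq_0 add.commute)
lemma deriv_diff: "deriv_op d \<Longrightarrow> d (a-b) = d a - d b"
  using deriv_add[of d a "-b"] deriv_uminus[of d b] by simp

lemma deriv_op_fls_deriv: "deriv_op (fls_deriv :: 'a::comm_ring_1 fls \<Rightarrow> _)"
  by (simp add: deriv_op_def)

definition Pd :: "'a::idom poly fls \<Rightarrow> 'a poly fls" where "Pd = fls_map pderiv"

lemma Pd_nth: "Pd f $$ n = pderiv (f $$ n)"
  by (simp add: Pd_def fls_map_nth)

lemma pderiv_sum': "pderiv (sum f A) = (\<Sum>x\<in>A. pderiv (f x))"
  by (induct A rule: infinite_finite_induct) (auto simp: pderiv_add)

lemma deriv_op_Pd: "deriv_op (Pd :: 'a::idom poly fls \<Rightarrow> _)"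
proof -
  have m: "Pd (a*b) = a * Pd b + Pd a * b" for a b :: "'a poly fls"
  proof (rule fls_eqI)
    fix n
    have ba: "\<forall>i<fls_subdegree a. a $$ i = 0" "\<forall>i<fls_subdegree b. b $$ i = 0" by auto
    have bb: "\<forall>i<fls_subdegree a. Pd a $$ i = 0" "\<forall>i<fls_subdegree b. Pd b $$ i = 0"
      by (auto simp: Pd_nth)
    have "Pd (a*b) $$ n = (\<Sum>i=fls_subdegree a..n-fls_subdegree b. a $$ i * pderiv (b $$ (n-i)) + pderiv (a $$ i) * b $$ (n-i))"
      unfolding Pd_nth fls_times_nth_bound[OF ba, of n] pderiv_sum'
      by (simp add: pderiv_mult mult.commute)
    also have "\<dots> = (a * Pd b) $$ n + (Pd a * b) $$ n"
      unfolding fls_times_nth_bound[OF ba(1) bb(2), of n] fls_times_nth_bound[OF bb(1) ba(2), of n]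
      by (simp add: sum.distrib Pd_nth)
    finally show "Pd (a*b) $$ n = (a * Pd b + Pd a * b) $$ n" by simp
  qed
  have a: "Pd (a+b) = Pd a + Pd b" for a b :: "'a poly fls"
    by (rule fls_eqI) (simp add: Pd_nth pderiv_add)
  show ?thesis using m a by (simp add: deriv_op_def)
qed

section \<open>Bivariate evaluation\<close>

definition cst :: "'a::comm_ring_1 \<Rightarrow> 'a poly fls" where "cst c = fls_const [:c:]"

lemma rhom_cst: "rhom (cst :: 'a::comm_ring_1 \<Rightarrow> _)"
proof -
  have a: "fls_const (x + y) = fls_const x + fls_const y" for x y :: "'a poly"
    by (rule fls_eqI) simp
  have m: "[:x * y:] = [:x:] * [:y:]" for x y :: 'a by simp
  have p: "[:x + y:] = [:x:] + [:y:]" for x y :: 'a by simp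
  have m2: "fls_const [:x * y:] = fls_const [:x:] * fls_const [:y:]" for x y :: 'a
    by (simp only: m fls_const_mult_const)
  have p2: "fls_const [:x + y:] = fls_const [:x:] + fls_const [:y:]" for x y :: 'a
    by (simp only: p a)
  show ?thesis
    unfolding rhom_def cst_def using m2 p2 by (simp add: one_pCons)
qed

definition phi :: "'a::comm_ring_1 poly fls \<Rightarrow> 'a poly \<Rightarrow> 'a poly fls" where
  "phi X p = poly (map_poly cst p) X"
definition V :: "'a::comm_ring_1 poly fls \<Rightarrow> 'a poly fls \<Rightarrow> 'a poly poly \<Rightarrow> 'a poly fls" where
  "V X s h = poly (map_poly (phi X) h) s"

lemma rhom_phi: "rhom (phi X)" unfolding phi_def by (rule rhom_eval[OF rhom_cst])
lemma rhom_V: "rhom (V X s)" unfolding V_def by (rule rhom_eval[OF rhom_phi])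
lemma phi_pCons: "phi X (pCons a p) = cst a + X * phi X p"
  by (simp add: phi_def map_poly_pCons rhom_0[OF rhom_cst])
lemma V_pCons: "V X s (pCons a p) = phi X a + s * V X s p"
  by (simp add: V_def map_poly_pCons rhom_0[OF rhom_phi])

lemma partial_x_pCons: "partial_x (pCons q h) = pCons (pderiv q) (partial_x h)"
  by (simp add: partial_x_def map_poly_pCons)
lemma partial_y_pCons: "partial_y (pCons q h) = h + pCons 0 (partial_y h)"
  by (simp add: partial_y_def pderiv_pCons)

lemma chain_phi:
  fixes d :: "'a::field poly fls \<Rightarrow> _"
  assumes d: "deriv_op d" and dc: "\<And>c. d (cst c) = 0"
  shows "d (phi X p) = phi X (pderiv p) * d X"
proof (induct p rule: pCons_induct)
  case 0 then show ?case by (simp add: phi_def deriv_0[OF d])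
next
  case (pCons a p)
  have "d (phi X (pCons a p)) = X * d (phi X p) + d X * phi X p"
    by (simp add: phi_pCons deriv_add[OF d] deriv_mult[OF d] dc)
  also have "\<dots> = phi X (pderiv (pCons a p)) * d X"
    by (simp add: pCons pderiv_pCons rhom_add[OF rhom_phi] phi_pCons rhom_0[OF rhom_cst] algebra_simps)
  finally show ?case .
qed

lemma chain_V:
  fixes d :: "'a::field poly fls \<Rightarrow> _"
  assumes d: "deriv_op d" and dc: "\<And>c. d (cst c) = 0"
  shows "d (V X s h) = V X s (partial_x h) * d X + V X s (partial_y h) * d s"
proof (induct h rule: pCons_induct)
  case 0 then show ?case by (simp add: V_def deriv_0[OF d] partial_x_def partial_y_def)
next
  case (pCons a p)
  have "d (V X s (pCons a p)) = phi X (pderiv a) * d X + (s * d (V X s p) + d s * V X s p)"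
    by (simp add: V_pCons deriv_add[OF d] deriv_mult[OF d] chain_phi[OF d dc])
  also have "\<dots> = V X s (partial_x (pCons a p)) * d X + V X s (partial_y (pCons a p)) * d s"
    by (simp add: pCons partial_x_pCons partial_y_pCons V_pCons rhom_add[OF rhom_V]
          rhom_0[OF rhom_phi] algebra_simps)
  finally show ?case .
qed

lemma jacobian_V:
  fixes d1 d2 :: "'a::field poly fls \<Rightarrow> _"
  assumes d1: "deriv_op d1" and dc1: "\<And>c. d1 (cst c) = 0"
      and d2: "deriv_op d2" and dc2: "\<And>c. d2 (cst c) = 0"
  shows "d1 (V X s h1) * d2 (V X s h2) - d2 (V X s h1) * d1 (V X s h2) =
     (d1 X * d2 s - d2 X * d1 s) * V X s (partial_x h1 * partial_y h2 - partial_y h1 * partial_x h2)"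
  by (simp add: chain_V[OF d1 dc1] chain_V[OF d2 dc2] rhom_diff[OF rhom_V] rhom_mult[OF rhom_V]
      algebra_simps)

section \<open>Lifting to K[pi]((s))\<close>

definition psi :: "'a::comm_ring_1 fls \<Rightarrow> 'a poly fls" where
  "psi = fls_map (\<lambda>c. [:c:])"

lemma psi_nth: "psi a $$ n = [: a $$ n :]"
  by (simp add: psi_def fls_map_nth)

lemma rhom_psi: "rhom (psi :: 'a::comm_ring_1 fls \<Rightarrow> _)"
  unfolding psi_def by (rule rhom_fls_map) (simp add: rhom_def one_pCons)

lemma psi_const: "psi (fls_const c) = cst c"
  by (rule fls_eqI) (simp add: psi_nth cst_def)

lemma psi_X_intpow: "psi (fls_X_intpow k) = fls_X_intpow k"
  by (rule fls_eqI) (simp add: psi_nth one_pCons)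

lemma psi_eq_0_iff: "psi a = 0 \<longleftrightarrow> a = 0"
proof
  assume "psi a = 0"
  hence "\<forall>n. [: a $$ n :] = 0" by (metis fls_zero_nth psi_nth)
  thus "a = 0" by (intro fls_eqI) simp
qed (simp add: rhom_0[OF rhom_psi])

lemma psi_subst_inv:
  "map_poly psi (subst_inv N h) = map_poly (phi (fls_X_intpow (- int N))) (h :: 'a::field poly poly)"
proof -
  have "map_poly psi (subst_inv N h) =
     map_poly (\<lambda>p. psi (poly (map_poly fls_const p) (fls_X_intpow (- int N)))) h"
    unfolding subst_inv_def
    by (subst map_poly_map_poly) (auto simp: o_def rhom_0[OF rhom_psi])
  also have "(\<lambda>p::'a poly. psi (poly (map_poly fls_const p) (fls_X_intpow (- int N)))) = phi (fls_X_intpow (- int N))"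
  proof
    fix p :: "'a poly"
    show "psi (poly (map_poly fls_const p) (fls_X_intpow (- int N))) = phi (fls_X_intpow (- int N)) p"
      unfolding poly_hom[OF rhom_psi] phi_def psi_X_intpow
      by (subst map_poly_map_poly) (auto simp: o_def rhom_0[OF rhom_psi] psi_const)
  qed
  finally show ?thesis .
qed

lemma fls_deriv_cst: "fls_deriv (cst c) = 0"
  by (simp add: cst_def)
lemma Pd_cst: "Pd (cst c) = 0"
  by (rule fls_eqI) (simp add: cst_def Pd_nth)
lemma Pd_X_intpow: "Pd (fls_X_intpow k :: 'a::idom poly fls) = 0"
  by (rule fls_eqI) (simp add: Pd_nth)
lemma Pd_psi: "Pd (psi a) = 0"
  by (rule fls_eqI) (simp add: Pd_nth psi_nth)
lemma Pd_sigma: "Pd (psi a + fls_const [:0,1:] * fls_X_intpow D) = fls_X_intpow D"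
  by (rule fls_eqI) (simp add: Pd_nth psi_nth pderiv_add pderiv_pCons)

lemma fls_deriv_X_intpow:
  "fls_deriv (fls_X_intpow k :: 'a::comm_ring_1 fls) = fls_const (of_int k) * fls_X_intpow (k-1)"
proof (rule fls_eqI)
  fix n
  show "fls_deriv (fls_X_intpow k :: 'a fls) $$ n = (fls_const (of_int k) * fls_X_intpow (k-1)) $$ n"
  proof (cases "n = k - 1")
    case True thus ?thesis by simp
  next
    case False thus ?thesis by auto
  qed
qed

lemma J_nth:
  "(fls_const (a::'b::comm_ring_1) * fls_X_intpow k * fls_X_intpow D * fls_const b) $$ n
     = (if n = k + D then a*b else 0)"
proof -
  have "fls_const a * fls_X_intpow k * fls_X_intpow D * fls_const b = fls_const (a*b) * fls_X_intpow (k+D)"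
    by (simp add: fls_X_intpow_times_fls_X_intpow mult.assoc flip: fls_const_mult_const)
  thus ?thesis by simp
qed

lemma prod_list_lead:
  fixes ws :: "'b::idom fls list"
  assumes "\<forall>w\<in>set ws. w \<noteq> 0"
  shows "prod_list ws \<noteq> 0 \<and> fls_subdegree (prod_list ws) = sum_list (map fls_subdegree ws) \<and>
         prod_list ws $$ sum_list (map fls_subdegree ws) = prod_list (map (\<lambda>w. w $$ fls_subdegree w) ws)"
  using assms
proof (induct ws)
  case Nil thus ?case by simp
next
  case (Cons w ws)
  hence w: "w \<noteq> 0" and IH: "prod_list ws \<noteq> 0" "fls_subdegree (prod_list ws) = sum_list (map fls_subdegree ws)"
     "prod_list ws $$ sum_list (map fls_subdegree ws) = prod_list (map (\<lambda>w. w $$ fls_subdegree w) ws)"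
    by auto
  have "(w * prod_list ws) $$ (fls_subdegree w + fls_subdegree (prod_list ws)) =
     w $$ fls_subdegree w * prod_list ws $$ fls_subdegree (prod_list ws)"
    by (rule fls_times_base)
  thus ?case using w IH by simp
qed

lemma map_pcompose_h:
  assumes "rhom h"
  shows "poly (map_poly h (pcompose p q)) z = poly (map_poly h p) (poly (map_poly h q) z)"
proof (induct p rule: pCons_induct)
  case 0 thus ?case by simp
next
  case (pCons a p)
  show ?case
    by (simp add: pcompose_pCons map_poly_add_h[OF assms] map_poly_mult_h[OF assms]
        map_poly_pCons rhom_0[OF assms] pCons)
qed

lemma rhom_fls_const: "rhom (fls_const :: 'a::comm_ring_1 \<Rightarrow> 'a fls)"
proof -
  have a: "fls_const (x + y) = fls_const x + fls_const y" for x y :: 'a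
    by (rule fls_eqI) simp
  show ?thesis by (simp add: rhom_def a fls_const_mult_const)
qed

lemma rhom_phiN: "rhom (\<lambda>p. poly (map_poly fls_const p) (x :: 'a::comm_ring_1 fls))"
  by (rule rhom_eval[OF rhom_fls_const])

lemma subst_inv_minus_const:
  "subst_inv N (f - [:[:\<xi>:]:]) = subst_inv N f - [:fls_const (\<xi>::'a::field):]"
  unfolding subst_inv_def
  by (simp add: map_poly_diff_h[OF rhom_phiN] map_poly_pCons rhom_0[OF rhom_phiN])

lemma partial_x_minus_const: "partial_x (f - [:[:\<xi>:]:]) = partial_x f"
  by (intro poly_eqI) (simp add: partial_x_def coeff_map_poly pderiv_diff coeff_pCons split: nat.splits)

lemma partial_y_minus_const: "partial_y (f - [:[:\<xi>:]:]) = partial_y f"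
  by (simp add: partial_y_def pderiv_diff pderiv_pCons)

lemma V_const: "V X s [:[:c:]:] = cst c"
  by (simp add: V_def phi_def map_poly_pCons rhom_0[OF rhom_cst] rhom_0[OF rhom_phi])

lemma lt_term:
  fixes a :: "'a::comm_ring_1 fls"
  assumes "a \<noteq> 0" "fls_subdegree a \<le> D"
  defines "w \<equiv> psi a + fls_const [:0,1:] * fls_X_intpow D"
  shows "w \<noteq> 0" "fls_subdegree w = fls_subdegree a"
        "w $$ fls_subdegree a = [:a $$ fls_subdegree a:] + (if fls_subdegree a = D then [:0,1:] else 0)"
proof -
  have nth: "w $$ n = [:a $$ n:] + (if n = D then [:0,1:] else 0)" for n
    by (simp add: w_def psi_nth)
  have nz: "w $$ fls_subdegree a \<noteq> 0"
  proof
    assume "w $$ fls_subdegree a = 0"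
    hence "coeff (w $$ fls_subdegree a) 0 = 0" by simp
    hence "a $$ fls_subdegree a = 0" by (simp add: nth split: if_splits)
    with assms(1) show False by simp
  qed
  thus "w \<noteq> 0" by (metis fls_nonzeroI)
  show "fls_subdegree w = fls_subdegree a"
    by (rule fls_subdegree_eqI[OF nz]) (use assms(2) in \<open>auto simp: nth\<close>)
  show "w $$ fls_subdegree a = [:a $$ fls_subdegree a:] + (if fls_subdegree a = D then [:0,1:] else 0)"
    by (rule nth)
qed

lemma taylor_nth:
  fixes T :: "'a::field fls poly"
  shows "coeff (poly (map_poly psi T) (fls_const [:0,1:] * fls_X_intpow D) $$ n) j
           = coeff T j $$ (n - int j * D)"
proof -
  define u :: "'a poly fls" where "u = fls_const [:0,1:] * fls_X_intpow D"
  have dm: "degree (map_poly psi T) = degree T"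
    by (rule degree_map_poly) (simp add: psi_eq_0_iff)
  have pu: "poly (map_poly psi T) u = (\<Sum>i\<le>degree T. psi (coeff T i) * u ^ i)"
    by (simp add: poly_altdef dm coeff_map_poly rhom_0[OF rhom_psi])
  have trm: "(psi c * u ^ i) $$ n = monom (c $$ (n - int i * D)) i" for c :: "'a fls" and i
  proof -
    have "u ^ i = fls_const ([:0,1:]^i) * fls_X_intpow (int i * D)"
      by (simp add: u_def power_mult_distrib fls_const_power fls_X_intpow_power)
    hence "psi c * u ^ i = fls_const ([:0,1:]^i) * (psi c * fls_X_intpow (int i * D))"
      by (simp add: mult_ac)
    hence "(psi c * u ^ i) $$ n = [:0,1:]^i * [: c $$ (n - int i * D) :]"
      by (simp add: fls_X_intpow_times_conv_shift psi_nth)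
    thus ?thesis by (simp add: monom_altdef mult.commute)
  qed
  have "coeff (poly (map_poly psi T) u $$ n) j = (\<Sum>i\<le>degree T. coeff (monom (coeff T i $$ (n - int i * D)) i) j)"
    by (simp add: pu fls_nth_sum trm coeff_sum)
  also have "\<dots> = (\<Sum>i\<le>degree T. if i = j then coeff T i $$ (n - int i * D) else 0)"
    by (simp add: coeff_monom)
  also have "\<dots> = coeff T j $$ (n - int j * D)"
    by (cases "j \<le> degree T") (auto simp: coeff_eq_0)
  finally show ?thesis by (simp add: u_def)
qed

lemma jac_low:
  fixes H1 H2 :: "'a::idom poly fls"
  defines "J \<equiv> fls_deriv H1 * Pd H2 - Pd H1 * fls_deriv H2"
  shows "\<And>n. n < fls_subdegree H1 + fls_subdegree H2 - 1 \<Longrightarrow> J $$ n = 0"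
    and "J $$ (fls_subdegree H1 + fls_subdegree H2 - 1) =
      of_int (fls_subdegree H1) * (H1 $$ fls_subdegree H1) * pderiv (H2 $$ fls_subdegree H2)
      - pderiv (H1 $$ fls_subdegree H1) * (of_int (fls_subdegree H2) * (H2 $$ fls_subdegree H2))"
proof -
  define P Q where "P = fls_subdegree H1" and "Q = fls_subdegree H2"
  have b1: "\<forall>i<P-1. fls_deriv H1 $$ i = 0" "\<forall>i<Q. Pd H2 $$ i = 0"
    by (auto simp: P_def Q_def Pd_nth)
  have b2: "\<forall>i<P. Pd H1 $$ i = 0" "\<forall>i<Q-1. fls_deriv H2 $$ i = 0"
    by (auto simp: P_def Q_def Pd_nth)
  have e: "J $$ n = (\<Sum>i=P-1..n-Q. fls_deriv H1 $$ i * Pd H2 $$ (n-i))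
     - (\<Sum>i=P..n-(Q-1). Pd H1 $$ i * fls_deriv H2 $$ (n-i))" for n
    unfolding J_def fls_minus_nth fls_times_nth_bound[OF b1, of n] fls_times_nth_bound[OF b2, of n] ..
  show "J $$ n = 0" if "n < fls_subdegree H1 + fls_subdegree H2 - 1" for n
    using that unfolding e P_def Q_def by simp
  have "J $$ (P+Q-1) = fls_deriv H1 $$ (P-1) * Pd H2 $$ Q - Pd H1 $$ P * fls_deriv H2 $$ (Q-1)"
    unfolding e by simp
  thus "J $$ (fls_subdegree H1 + fls_subdegree H2 - 1) =
      of_int (fls_subdegree H1) * (H1 $$ fls_subdegree H1) * pderiv (H2 $$ fls_subdegree H2)
      - pderiv (H1 $$ fls_subdegree H1) * (of_int (fls_subdegree H2) * (H2 $$ fls_subdegree H2))"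
    by (simp add: P_def Q_def Pd_nth)
qed

lemma key:
  fixes f g :: "'a::field_char_0 poly poly" and A r0 :: "'a fls" and rs :: "'a fls list"
  assumes jac: "partial_x f * partial_y g - partial_y f * partial_x g = [:[:c:]:]" and c0: "c \<noteq> 0"
    and N: "N > 0"
    and G0: "subst_inv N g = (\<Prod>r\<leftarrow>rs. [:-r,1:])"
    and root: "poly (subst_inv N (f - [:[:\<xi>:]:])) A = 0"
    and ne: "\<forall>r\<in>set rs. A \<noteq> r"
    and r0: "r0 \<in> set rs"
    and Dmax: "\<forall>r\<in>set rs. fls_subdegree (A - r) \<le> D" and D: "fls_subdegree (A - r0) = D"
  defines "Q \<equiv> fls_subdegree (poly (subst_inv N g) A)"
  shows "Q < 0 \<Longrightarrow> D < int N \<or> (\<forall>n\<le>0. (poly (subst_inv N f) r0 - fls_const \<xi>) $$ n = 0)"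
    and "Q = 0 \<Longrightarrow> D > int N"
proof -
  define X :: "'a poly fls" where "X = fls_X_intpow (- int N)"
  define \<sigma> :: "'a poly fls" where "\<sigma> = psi A + fls_const [:0,1:] * fls_X_intpow D"
  define h1 where "h1 = f - [:[:\<xi>:]:]"
  define H1 where "H1 = V X \<sigma> h1"
  define H2 where "H2 = V X \<sigma> g"
  have VH: "V X \<sigma> h = poly (map_poly psi (subst_inv N h)) \<sigma>" for h
    by (simp add: V_def psi_subst_inv X_def)
  define J where "J = fls_deriv H1 * Pd H2 - Pd H1 * fls_deriv H2"
  have "J = (fls_deriv X * Pd \<sigma> - Pd X * fls_deriv \<sigma>) *
      V X \<sigma> (partial_x h1 * partial_y g - partial_y h1 * partial_x g)"
    unfolding J_def H1_def H2_def
    by (rule jacobian_V[OF deriv_op_fls_deriv fls_deriv_cst deriv_op_Pd Pd_cst])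
  also have "\<dots> = fls_const (of_int (- int N)) * fls_X_intpow (- int N - 1) * fls_X_intpow D * fls_const [:c:]"
  proof -
    have PdX: "Pd X = 0" unfolding X_def by (rule Pd_X_intpow)
    have dX: "fls_deriv X = fls_const (of_int (- int N)) * fls_X_intpow (- int N - 1)"
      unfolding X_def by (rule fls_deriv_X_intpow)
    have Ps: "Pd \<sigma> = fls_X_intpow D" unfolding \<sigma>_def by (rule Pd_sigma)
    have Vc: "V X \<sigma> (partial_x h1 * partial_y g - partial_y h1 * partial_x g) = fls_const [:c:]"
      by (simp only: h1_def partial_x_minus_const partial_y_minus_const jac V_const cst_def)
    show ?thesis unfolding PdX dX Ps Vc by simp
  qed
  finally have Jeq: "J = \<dots>" .
  have Jnth: "J $$ n = (if n = D - int N - 1 then of_int (- int N) * [:c:] else 0)" for n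
    unfolding Jeq J_nth by (auto simp: algebra_simps)
  have Jc: "of_int (- int N) * [:c:] \<noteq> (0::'a poly)"
    using N c0 by (simp add: of_int_poly)
  have Jnz: "J \<noteq> 0" using Jnth[of "D - int N - 1"] Jc by auto
  hence H1nz: "H1 \<noteq> 0" and H2nz: "H2 \<noteq> 0" by (auto simp: J_def deriv_0[OF deriv_op_Pd])

  define w where "w r = psi (A - r) + fls_const [:0,1:] * fls_X_intpow D" for r
  have H2prod: "H2 = prod_list (map w rs)"
  proof -
    have mp: "poly (map_poly psi [:-r,1:]) \<sigma> = w r" for r
      by (simp add: map_poly_pCons rhom_0[OF rhom_psi] rhom_uminus[OF rhom_psi] rhom_1[OF rhom_psi]
             w_def \<sigma>_def rhom_diff[OF rhom_psi] algebra_simps)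
    have "poly (map_poly psi (\<Prod>r\<leftarrow>rs'. [:-r,1:])) \<sigma> = prod_list (map w rs')" for rs'
    proof (induct rs')
      case Nil thus ?case by (simp add: map_poly_1_h[OF rhom_psi])
    next
      case (Cons r rs')
      have "map_poly psi (\<Prod>r\<leftarrow>r#rs'. [:-r,1:]) = map_poly psi [:-r,1:] * map_poly psi (\<Prod>r\<leftarrow>rs'. [:-r,1:])"
        by (simp only: prod_list.Cons list.map map_poly_mult_h[OF rhom_psi])
      thus ?case by (simp only: poly_mult mp Cons list.map prod_list.Cons)
    qed
    thus ?thesis by (simp add: H2_def VH G0)
  qed
  have gA: "poly (subst_inv N g) A = prod_list (map (\<lambda>r. A - r) rs)"
    unfolding G0 by (induct rs) (simp_all add: algebra_simps)
  have wprops: "w r \<noteq> 0" "fls_subdegree (w r) = fls_subdegree (A - r)"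
     "w r $$ fls_subdegree (A - r) = [:(A - r) $$ fls_subdegree (A - r):] +
        (if fls_subdegree (A - r) = D then [:0,1:] else 0)" if "r \<in> set rs" for r
  proof -
    have "A - r \<noteq> 0" using ne that by auto
    moreover have "fls_subdegree (A - r) \<le> D" using Dmax that by auto
    ultimately show "w r \<noteq> 0" "fls_subdegree (w r) = fls_subdegree (A - r)"
     "w r $$ fls_subdegree (A - r) = [:(A - r) $$ fls_subdegree (A - r):] +
        (if fls_subdegree (A - r) = D then [:0,1:] else 0)"
      using lt_term[of "A - r" D] by (simp_all add: w_def)
  qed
  have L1: "prod_list (map (\<lambda>r. A - r) rs) \<noteq> 0 \<and>
     fls_subdegree (prod_list (map (\<lambda>r. A - r) rs)) = sum_list (map fls_subdegree (map (\<lambda>r. A - r) rs)) \<and>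
     prod_list (map (\<lambda>r. A - r) rs) $$ sum_list (map fls_subdegree (map (\<lambda>r. A - r) rs)) =
       prod_list (map (\<lambda>w. w $$ fls_subdegree w) (map (\<lambda>r. A - r) rs))"
    by (rule prod_list_lead) (use ne in auto)
  have L2: "prod_list (map w rs) \<noteq> 0 \<and>
     fls_subdegree (prod_list (map w rs)) = sum_list (map fls_subdegree (map w rs)) \<and>
     prod_list (map w rs) $$ sum_list (map fls_subdegree (map w rs)) =
       prod_list (map (\<lambda>w. w $$ fls_subdegree w) (map w rs))"
    by (rule prod_list_lead) (use wprops(1) in auto)
  have sdeq: "map fls_subdegree (map w rs) = map fls_subdegree (map (\<lambda>r. A - r) rs)"
    by (simp add: wprops(2))
  have QH2: "fls_subdegree H2 = Q"
  proof -
    have "fls_subdegree H2 = sum_list (map fls_subdegree (map w rs))"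
      using L2 by (simp only: H2prod)
    also have "\<dots> = sum_list (map fls_subdegree (map (\<lambda>r. A - r) rs))" by (simp only: sdeq)
    also have "\<dots> = Q" using L1 by (simp only: Q_def gA)
    finally show ?thesis .
  qed
  define ell where "ell r = [:(A - r) $$ fls_subdegree (A - r):] +
        (if fls_subdegree (A - r) = D then [:0,1:] else (0::'a poly))" for r
  define G where "G = H2 $$ Q"
  have Gprod: "G = prod_list (map ell rs)"
  proof -
    have "G = prod_list (map w rs) $$ sum_list (map fls_subdegree (map w rs))"
      using L2 QH2 by (simp only: G_def H2prod)
    also have "\<dots> = prod_list (map (\<lambda>w. w $$ fls_subdegree w) (map w rs))"
      using L2 by blast
    also have "\<dots> = prod_list (map ell rs)"
      by (simp add: o_def ell_def wprops(2,3) cong: map_cong)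
    finally show ?thesis .
  qed
  have polyG: "poly G x = prod_list (map (\<lambda>r. poly (ell r) x) rs)" for x
    unfolding Gprod by (induct rs) simp_all
  have ell0: "poly (ell r) 0 = (A - r) $$ fls_subdegree (A - r)" for r
    by (simp add: ell_def)
  have ell0nz: "poly (ell r) 0 \<noteq> 0" if "r \<in> set rs" for r
  proof -
    have "A - r \<noteq> 0" using ne that by auto
    thus ?thesis unfolding ell0 by (rule nth_fls_subdegree_nonzero)
  qed
  have G0: "poly G 0 \<noteq> 0"
    unfolding polyG prod_list_zero_iff using ell0nz by auto
  have Groot: "poly G (- ((A - r0) $$ D)) = 0"
    unfolding polyG using r0 D by (force simp: prod_list_zero_iff ell_def)
  have Gnz: "G \<noteq> 0" using G0 by auto
  have noconst: "pderiv p \<noteq> 0" if "poly p a \<noteq> poly p b" for p :: "'a poly" and a b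
  proof
    assume "pderiv p = 0"
    hence "degree p = 0" by (simp add: pderiv_eq_0_iff)
    hence "p = [:coeff p 0:]" by (metis degree_0_id)
    hence "poly p a = poly p b" by (metis poly_pCons poly_0 mult_zero_right add_0_right)
    with that show False by simp
  qed
  have dG: "pderiv G \<noteq> 0" using noconst[of G 0 "- ((A - r0) $$ D)"] G0 Groot by auto

  define Fx where "Fx = subst_inv N h1"
  define T where "T = pcompose Fx [:A,1:]"
  have FxT: "Fx = pcompose T [:-A,1:]"
    by (simp add: T_def flip: pcompose_assoc) (simp add: pcompose_pCons)
  have H1T: "H1 = poly (map_poly psi T) (fls_const [:0,1:] * fls_X_intpow D)"
  proof -
    have "H1 = poly (map_poly psi T) (poly (map_poly psi [:-A,1:]) \<sigma>)"
      unfolding H1_def VH Fx_def[symmetric] FxT by (rule map_pcompose_h[OF rhom_psi])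
    also have "poly (map_poly psi [:-A,1:]) \<sigma> = fls_const [:0,1:] * fls_X_intpow D"
      by (simp add: map_poly_pCons rhom_0[OF rhom_psi] rhom_uminus[OF rhom_psi] rhom_1[OF rhom_psi] \<sigma>_def)
    finally show ?thesis .
  qed
  have Tc: "coeff (H1 $$ n) j = coeff T j $$ (n - int j * D)" for n j
    unfolding H1T by (rule taylor_nth)
  have T0: "coeff T 0 = 0"
    using root by (simp add: T_def Fx_def h1_def poly_pcompose flip: poly_0_coeff_0)
  define P where "P = fls_subdegree H1"
  define F where "F = H1 $$ P"
  have Fnz: "F \<noteq> 0" using H1nz by (simp add: F_def P_def)
  have F0: "poly F 0 = 0"
    using Tc[of P 0] T0 by (simp add: F_def poly_0_coeff_0)
  have dF: "pderiv F \<noteq> 0"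
  proof -
    obtain x where "poly F x \<noteq> 0" using Fnz poly_all_0_iff_0 by blast
    thus ?thesis using noconst[of F x 0] F0 by auto
  qed
  define L where "L = of_int P * F * pderiv G - pderiv F * (of_int Q * G)"
  have low: "J $$ n = 0" if "n < P + Q - 1" for n
    using jac_low(1)[of n H1 H2] that QH2 by (simp add: J_def P_def)
  have top: "J $$ (P + Q - 1) = L"
    using jac_low(2)[of H1 H2] QH2 by (simp add: J_def P_def L_def F_def G_def)
  have ge: "P + Q - 1 \<le> D - int N - 1"
  proof (rule ccontr)
    assume "\<not> ?thesis"
    hence "J $$ (D - int N - 1) = 0" by (intro low) simp
    with Jnth[of "D - int N - 1"] Jc show False by simp
  qed
  have cases: "(P + Q = D - int N \<and> L = of_int (- int N) * [:c:]) \<or> (P + Q < D - int N \<and> L = 0)"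
  proof (cases "P + Q = D - int N")
    case True thus ?thesis using top Jnth[of "P + Q - 1"] by auto
  next
    case False
    hence "P + Q < D - int N" using ge by simp
    thus ?thesis using top Jnth[of "P + Q - 1"] by auto
  qed
  have Q0: "poly (of_int k :: 'a poly) x = of_int k" for k x
    by (simp add: of_int_poly)

  show "Q = 0 \<Longrightarrow> D > int N"
  proof -
    assume Qz: "Q = 0"
    hence LQ: "L = of_int P * F * pderiv G" by (simp add: L_def)
    from cases show ?thesis
    proof
      assume a: "P + Q = D - int N \<and> L = of_int (- int N) * [:c:]"
      have "poly L 0 = 0" unfolding LQ by (simp add: F0)
      moreover have "poly (of_int (- int N) * [:c:] :: 'a poly) 0 \<noteq> 0"
        using N c0 by (simp add: Q0)
      ultimately show ?thesis using a by simp
    next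
      assume a: "P + Q < D - int N \<and> L = 0"
      hence "(of_int P :: 'a poly) = 0" using Fnz dG LQ by simp
      hence "P = 0" by (metis of_int_eq_0_iff)
      thus ?thesis using a Qz by simp
    qed
  qed

  show "Q < 0 \<Longrightarrow> D < int N \<or> (\<forall>n\<le>0. (poly (subst_inv N f) r0 - fls_const \<xi>) $$ n = 0)"
  proof -
    assume Qn: "Q < 0"
    from cases show ?thesis
    proof
      assume a: "P + Q < D - int N \<and> L = 0"
      \<comment> \<open>degenerate case is impossible\<close>
      have eq: "of_int P * F * pderiv G = pderiv F * (of_int Q * G)" using a by (simp add: L_def)
      have Qp: "(of_int Q :: 'a poly) \<noteq> 0" using Qn by (metis of_int_eq_0_iff less_irrefl)
      have rhsnz: "pderiv F * (of_int Q * G) \<noteq> 0" using dF Qp Gnz by simp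
      have ordF: "order 0 F = Suc (order 0 (pderiv F))" by (rule order_pderiv[OF Fnz F0])
      have "order 0 (pderiv F * (of_int Q * G)) = order 0 (pderiv F) + order 0 (of_int Q * G)"
        using rhsnz by (rule order_mult)
      also have "order 0 (of_int Q * G) = 0"
        by (rule order_0I) (use G0 Qn in \<open>simp add: Q0\<close>)
      finally have o1: "order 0 (pderiv F * (of_int Q * G)) = order 0 (pderiv F)" by simp
      have lnz: "of_int P * F * pderiv G \<noteq> 0" using eq rhsnz by simp
      have "order 0 (of_int P * F * pderiv G) = order 0 (of_int P * F) + order 0 (pderiv G)"
        using lnz by (rule order_mult)
      moreover have "order 0 (of_int P * F) = order 0 (of_int P :: 'a poly) + order 0 F"
        using lnz by (intro order_mult) auto
      ultimately have "order 0 (of_int P * F * pderiv G) \<ge> order 0 F" by simp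
      with o1 eq ordF show ?thesis by simp
    next
      assume a: "P + Q = D - int N \<and> L = of_int (- int N) * [:c:]"
      show ?thesis
      proof (cases "P \<le> 0")
        case True thus ?thesis using a Qn by simp
      next
        case False
        hence Ppos: "P > 0" by simp
        have H1z: "H1 $$ n = 0" if "n \<le> 0" for n
          using that Ppos by (simp add: P_def)
        have Tz: "coeff T k $$ i = 0" if "i < 1 - int k * D" for k i
        proof -
          have "coeff T k $$ i = coeff (H1 $$ (i + int k * D)) k" using Tc[of "i + int k * D" k] by simp
          also have "\<dots> = 0" using H1z[of "i + int k * D"] that by simp
          finally show ?thesis .
        qed
        have rA: "r0 - A \<noteq> 0" using ne r0 by auto
        have sdA: "fls_subdegree (r0 - A) = D" using D by (simp add: fls_subdegree_minus_sym)
        have powz: "((r0 - A) ^ k) $$ i = 0" if "i < int k * D" for k i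
        proof -
          have "fls_subdegree ((r0 - A) ^ k) = int k * D" by (simp add: fls_subdegree_pow sdA)
          thus ?thesis using that by simp
        qed
        have "poly Fx r0 = poly T (r0 - A)" by (simp add: FxT poly_pcompose)
        also have "\<dots> = (\<Sum>k\<le>degree T. coeff T k * (r0 - A) ^ k)" by (rule poly_altdef)
        finally have pe: "poly Fx r0 = \<dots>" .
        have "poly Fx r0 $$ n = 0" if "n \<le> 0" for n
        proof -
          have "(coeff T k * (r0 - A) ^ k) $$ n = 0" for k
          proof -
            have b1: "\<forall>i<1 - int k * D. coeff T k $$ i = 0" using Tz by blast
            have b2: "\<forall>i<int k * D. ((r0 - A) ^ k) $$ i = 0" using powz by blast
            show ?thesis unfolding fls_times_nth_bound[OF b1 b2, of n] using that by simp
          qed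
          thus ?thesis unfolding pe fls_nth_sum by simp
        qed
        moreover have "poly Fx r0 = poly (subst_inv N f) r0 - fls_const \<xi>"
          by (simp add: Fx_def h1_def subst_inv_minus_const)
        ultimately show ?thesis by simp
      qed
    qed
  qed
qed


section \<open>The exceptional set\<close>

lemma subst_inv_deg:
  fixes g :: "'a::field poly poly"
  assumes "lead_coeff g = 1"
  shows "subst_inv N g \<noteq> 0" "degree (subst_inv N g) = degree g" "lead_coeff (subst_inv N g) = 1"
proof -
  have c: "coeff (subst_inv N g) i = poly (map_poly fls_const (coeff g i)) (fls_X_intpow (- int N))" for i
    unfolding subst_inv_def by (simp add: coeff_map_poly rhom_0[OF rhom_phiN])
  have top: "coeff (subst_inv N g) (degree g) = 1"
    using assms by (simp add: c map_poly_1_h[OF rhom_fls_const])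
  thus "subst_inv N g \<noteq> 0" by auto
  have "degree (subst_inv N g) \<le> degree g"
    by (rule degree_le) (simp add: c coeff_eq_0)
  moreover have "degree g \<le> degree (subst_inv N g)"
    by (rule le_degree) (simp add: top)
  ultimately show dd: "degree (subst_inv N g) = degree g" by simp
  show "lead_coeff (subst_inv N g) = 1" using top dd by simp
qed

lemma rhom_cp: "k > 0 \<Longrightarrow> rhom (\<lambda>a::'a::idom fls. fls_compose_power a k)"
  by (simp add: rhom_def)

lemma cp_subst_inv:
  fixes h :: "'a::field poly poly"
  assumes k: "k > 0"
  shows "fls_compose_power (poly (subst_inv N h) B) k = poly (subst_inv (N*k) h) (fls_compose_power B k)"
proof -
  have r: "rhom (\<lambda>a::'a fls. fls_compose_power a k)" using k by (rule rhom_cp)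
  have e: "(\<lambda>p::'a poly. fls_compose_power (poly (map_poly fls_const p) (fls_X_intpow (- int N))) k)
      = (\<lambda>p. poly (map_poly fls_const p) (fls_X_intpow (- int (N*k))))"
  proof
    fix p :: "'a poly"
    show "fls_compose_power (poly (map_poly fls_const p) (fls_X_intpow (- int N))) k
      = poly (map_poly fls_const p) (fls_X_intpow (- int (N*k)))"
    proof -
      have i: "int k * (- int N) = - int (N*k)" by simp
      have "(\<lambda>x. fls_compose_power (fls_const x) k) = (fls_const :: 'a \<Rightarrow> _)"
        using k by auto
      thus ?thesis
        unfolding poly_hom[OF r] using k
        by (subst map_poly_map_poly) (simp_all add: o_def mult_ac)
    qed
  qed
  show ?thesis
    unfolding poly_hom[OF r] subst_inv_def
    by (subst map_poly_map_poly) (use k e in \<open>simp_all add: o_def rhom_0[OF rhom_phiN]\<close>)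
qed

lemma E_finite:
  fixes f g :: "'a::field poly poly"
  assumes "lead_coeff g = 1"
  shows "finite {\<xi>. \<exists>N>0. \<exists>B. poly (subst_inv N g) B = 0 \<and>
              (\<forall>n\<le>0. (poly (subst_inv N f) B - fls_const \<xi>) $$ n = 0)}" (is "finite ?W")
proof (rule ccontr)
  assume inf: "infinite ?W"
  obtain S where S: "finite S" "card S = Suc (degree g)" "S \<subseteq> ?W"
    using infinite_arbitrarily_large[OF inf] by blast
  define Pr where "Pr \<xi> N B \<longleftrightarrow> N > 0 \<and> poly (subst_inv N g) B = 0 \<and>
      (\<forall>n\<le>0. (poly (subst_inv N f) B - fls_const \<xi>) $$ n = 0)" for \<xi> N B
  have ex: "\<forall>\<xi>\<in>S. \<exists>N. \<exists>B. Pr \<xi> N B"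
  proof
    fix \<xi> assume "\<xi> \<in> S"
    hence "\<xi> \<in> ?W" using S(3) by blast
    thus "\<exists>N. \<exists>B. Pr \<xi> N B" unfolding Pr_def by blast
  qed
  obtain NN where NN: "\<forall>\<xi>\<in>S. \<exists>B. Pr \<xi> (NN \<xi>) B"
    using bchoice[OF ex] by blast
  obtain BB where BB: "\<forall>\<xi>\<in>S. Pr \<xi> (NN \<xi>) (BB \<xi>)"
    using bchoice[OF NN] by blast
  define pp where "pp \<xi> = (NN \<xi>, BB \<xi>)" for \<xi>
  have pp: "fst (pp \<xi>) > 0 \<and> poly (subst_inv (fst (pp \<xi>)) g) (snd (pp \<xi>)) = 0 \<and>
      (\<forall>n\<le>0. (poly (subst_inv (fst (pp \<xi>)) f) (snd (pp \<xi>)) - fls_const \<xi>) $$ n = 0)"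
    if "\<xi> \<in> S" for \<xi>
    using BB that unfolding pp_def Pr_def by simp
  define M where "M = (\<Prod>\<xi>\<in>S. fst (pp \<xi>))"
  have Mpos: "M > 0" unfolding M_def using pp by (intro prod_pos) auto
  define kk where "kk \<xi> = M div fst (pp \<xi>)" for \<xi>
  have kk: "fst (pp \<xi>) * kk \<xi> = M" "kk \<xi> > 0" if "\<xi> \<in> S" for \<xi>
  proof -
    have "fst (pp \<xi>) dvd M" unfolding M_def using that S(1) by (intro dvd_prodI)
    thus "fst (pp \<xi>) * kk \<xi> = M" by (simp add: kk_def)
    thus "kk \<xi> > 0" using Mpos by (metis gr0I mult_0_right less_irrefl)
  qed
  define B' where "B' \<xi> = fls_compose_power (snd (pp \<xi>)) (kk \<xi>)" for \<xi>
  have root: "poly (subst_inv M g) (B' \<xi>) = 0" if "\<xi> \<in> S" for \<xi>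
  proof -
    have "poly (subst_inv M g) (B' \<xi>) = fls_compose_power (poly (subst_inv (fst (pp \<xi>)) g) (snd (pp \<xi>))) (kk \<xi>)"
      unfolding B'_def using kk[OF that] cp_subst_inv[of "kk \<xi>" "fst (pp \<xi>)" g "snd (pp \<xi>)"] by simp
    thus ?thesis using pp[OF that] by simp
  qed
  have val: "poly (subst_inv M f) (B' \<xi>) $$ 0 = \<xi>" if "\<xi> \<in> S" for \<xi>
  proof -
    have "poly (subst_inv M f) (B' \<xi>) = fls_compose_power (poly (subst_inv (fst (pp \<xi>)) f) (snd (pp \<xi>))) (kk \<xi>)"
      unfolding B'_def using kk[OF that] cp_subst_inv[of "kk \<xi>" "fst (pp \<xi>)" f "snd (pp \<xi>)"] by simp
    hence "poly (subst_inv M f) (B' \<xi>) $$ 0 = poly (subst_inv (fst (pp \<xi>)) f) (snd (pp \<xi>)) $$ 0"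
      using kk(2)[OF that] by (simp add: fls_nth_compose_power)
    also have "\<dots> = \<xi>" using pp[OF that] by auto
    finally show ?thesis .
  qed
  have inj: "inj_on B' S"
  proof (rule inj_onI)
    fix x y assume "x \<in> S" "y \<in> S" "B' x = B' y"
    hence "poly (subst_inv M f) (B' x) $$ 0 = poly (subst_inv M f) (B' y) $$ 0" by simp
    thus "x = y" using val \<open>x \<in> S\<close> \<open>y \<in> S\<close> by simp
  qed
  have sub: "B' ` S \<subseteq> {x. poly (subst_inv M g) x = 0}" using root by auto
  have nz: "subst_inv M g \<noteq> 0" "degree (subst_inv M g) = degree g"
    using subst_inv_deg[OF assms] by auto
  have "card (B' ` S) \<le> card {x. poly (subst_inv M g) x = 0}"
    by (rule card_mono[OF poly_roots_finite[OF nz(1)] sub])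
  also have "\<dots> \<le> degree g" using card_poly_roots_bound[OF nz(1)] nz(2) by simp
  finally show False using card_image[OF inj] S(2) by simp
qed


theorem lemma4p4:
  fixes f g :: "'a::{alg_closed_field, field_char_0} poly poly"
  assumes "jacobian_pair f g"
  shows "\<exists>E. finite E \<and> (\<forall>\<xi>. \<xi> \<notin> E \<longrightarrow>
    (\<forall>N A. N > 0 \<longrightarrow> splits (subst_inv N g) \<longrightarrow>
       poly (subst_inv N (f - [:[:\<xi>:]:])) A = 0 \<longrightarrow>
       (let gA = poly (subst_inv N g) A;
            \<delta> = Max {ord_t N (A - B) | B. poly (subst_inv N g) B = 0}
        in (gA \<noteq> 0 \<and> ord_t N gA < 0 \<longrightarrow> \<delta> < 1) \<and>
           (gA \<noteq> 0 \<and> ord_t N gA = 0 \<longrightarrow> \<delta> > 1))))"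
proof -
  obtain c where lg: "lead_coeff g = 1" and c0: "c \<noteq> 0"
    and jac: "partial_x f * partial_y g - partial_y f * partial_x g = [:[:c:]:]"
    using assms unfolding jacobian_pair_def by blast
  have dg: "degree g > 0"
  proof (rule ccontr)
    assume "\<not> ?thesis"
    hence d0: "degree g = 0" by simp
    hence "partial_y g = 0" by (simp add: partial_y_def pderiv_eq_0_iff)
    moreover have "g = 1" using d0 lg by (metis degree_0_id one_pCons)
    hence "partial_x g = 0" by (simp add: partial_x_def one_pCons map_poly_pCons)
    ultimately have "[:[:c:]:] = (0 :: 'a poly poly)" using jac by simp
    thus False using c0 by simp
  qed
  define E where "E = {\<xi>. \<exists>N>0. \<exists>B. poly (subst_inv N g) B = 0 \<and>
              (\<forall>n\<le>0. (poly (subst_inv N f) B - fls_const \<xi>) $$ n = 0)}"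
  have fin: "finite E" unfolding E_def by (rule E_finite[OF lg])
  have main: "(let gA = poly (subst_inv N g) A;
            \<delta> = Max {ord_t N (A - B) | B. poly (subst_inv N g) B = 0}
        in (gA \<noteq> 0 \<and> ord_t N gA < 0 \<longrightarrow> \<delta> < 1) \<and>
           (gA \<noteq> 0 \<and> ord_t N gA = 0 \<longrightarrow> \<delta> > 1))"
    if \<xi>E: "\<xi> \<notin> E" and N: "N > 0" and sp: "splits (subst_inv N g)"
      and root: "poly (subst_inv N (f - [:[:\<xi>:]:])) A = 0" for \<xi> N A
  proof -
    have sd: "subst_inv N g \<noteq> 0" "degree (subst_inv N g) = degree g" "lead_coeff (subst_inv N g) = 1"
      using subst_inv_deg[OF lg] by auto
    obtain rs where G0: "subst_inv N g = (\<Prod>r\<leftarrow>rs. [:-r,1:])"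
      using sp sd(3) unfolding splits_def by auto
    have rsne: "rs \<noteq> []"
    proof
      assume "rs = []"
      hence "degree (subst_inv N g) = 0" using G0 by simp
      thus False using sd(2) dg by simp
    qed
    have pe: "poly (subst_inv N g) B = prod_list (map (\<lambda>r. B - r) rs)" for B
      unfolding G0 by (induct rs) (simp_all add: algebra_simps)
    have roots: "{B. poly (subst_inv N g) B = 0} = set rs"
      unfolding pe by (auto simp: prod_list_zero_iff)
    define gA where "gA = poly (subst_inv N g) A"
    define S where "S = {ord_t N (A - B) | B. poly (subst_inv N g) B = 0}"
    have S: "S = (\<lambda>r. ord_t N (A - r)) ` set rs" unfolding S_def using roots by blast
    show ?thesis
      unfolding Let_def gA_def[symmetric] S_def[symmetric]
    proof (cases "gA = 0")
      case True thus "(gA \<noteq> 0 \<and> ord_t N gA < 0 \<longrightarrow> Max S < 1) \<and> (gA \<noteq> 0 \<and> ord_t N gA = 0 \<longrightarrow> 1 < Max S)"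
        by simp
    next
      case False
      have ne: "\<forall>r\<in>set rs. A \<noteq> r"
        using False unfolding gA_def pe by (auto simp: prod_list_zero_iff)
      define D where "D = Max ((\<lambda>r. fls_subdegree (A - r)) ` set rs)"
      have "D \<in> (\<lambda>r. fls_subdegree (A - r)) ` set rs" unfolding D_def using rsne by (intro Max_in) auto
      then obtain r0 where r0: "r0 \<in> set rs" and Dr0: "fls_subdegree (A - r0) = D" by auto
      have Dmax: "\<forall>r\<in>set rs. fls_subdegree (A - r) \<le> D" unfolding D_def by auto
      have MaxS: "Max S = of_int D / of_nat N"
      proof (rule Max_eqI)
        show "finite S" unfolding S by simp
        show "of_int D / of_nat N \<in> S" unfolding S using r0 Dr0 by (force simp: ord_t_def)
        fix y assume "y \<in> S"
        then obtain r where "r \<in> set rs" "y = ord_t N (A - r)" unfolding S by auto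
        thus "y \<le> of_int D / of_nat N" using Dmax N
          by (auto simp: ord_t_def intro!: divide_right_mono)
      qed
      define Q where "Q = fls_subdegree gA"
      have ordQ: "ord_t N gA = of_int Q / of_nat N" by (simp add: ord_t_def Q_def)
      note K = key[OF jac c0 N G0 root ne r0 Dmax Dr0, folded gA_def, folded Q_def]
      have part1: "Max S < 1" if "ord_t N gA < 0"
      proof -
        have Qn: "Q < 0" using that N by (simp add: ordQ divide_less_0_iff)
        have "\<not> (\<forall>n\<le>0. (poly (subst_inv N f) r0 - fls_const \<xi>) $$ n = 0)"
        proof
          assume "\<forall>n\<le>0. (poly (subst_inv N f) r0 - fls_const \<xi>) $$ n = 0"
          moreover have "poly (subst_inv N g) r0 = 0" using roots r0 by blast
          ultimately have "\<xi> \<in> E" unfolding E_def using N by blast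
          with \<xi>E show False by simp
        qed
        hence "D < int N" using K(1)[OF Qn] by blast
        thus ?thesis using N by (simp add: MaxS)
      qed
      have part2: "Max S > 1" if "ord_t N gA = 0"
      proof -
        have Qz: "Q = 0" using that N by (simp add: ordQ)
        hence "D > int N" using K(2) by blast
        thus ?thesis using N by (simp add: MaxS)
      qed
      show "(gA \<noteq> 0 \<and> ord_t N gA < 0 \<longrightarrow> Max S < 1) \<and> (gA \<noteq> 0 \<and> ord_t N gA = 0 \<longrightarrow> 1 < Max S)"
        using part1 part2 by blast
    qed
  qed
  show ?thesis using fin main by blast
qed

end
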